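(* Let $n=2k$ with $k\ge 2$. If $lmd(S_n)=2$, then no local metric basis $W$ of $S_n$ consists of one vertex of $C_i$ and one vertex of $C_j$ with $i\neq j$, $i,j\in\{a,b,c,d\}$.
   Context: For $n\ge 3$, $S_n$ is the graph with vertex set $\{a_i,b_i,c_i,d_i : 1\le i\le n\}$ and edge set $\{a_ia_{i+1}, b_ib_{i+1}, c_ic_{i+1}, d_id_{i+1}, a_{i+1}b_i, a_ib_i, b_ic_i, c_id_i : 1\le i\le n\}$, indices taken modulo $n$. For $i\in\{a,b,c,d\}$, $C_i$ is the cycle induced by $i_1,\ldots,i_n$. A vertex $w$ resolves $u,v$ if $d(u,w)\neq d(v,w)$ ($d$ the graph distance). A local resolving set is a vertex set $W$ such that every two adjacent vertices are resolved by some element of $W$; a local metric basis is a local resolving set of minimum cardinality, and $lmd(G)$ is that cardinality. *)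

theory Defs
  imports Main
begin

datatype cyc = Ca | Cb | Cc | Cd

type_synonym vert = "cyc \<times> nat"

text \<open>Vertices of S_n: (X, i) with 0 \<le> i < n stands for x_{i+1}, X in {a,b,c,d}.\<close>
definition verts :: "nat \<Rightarrow> vert set" where
  "verts n = UNIV \<times> {..<n}"

definition gen_edge :: "nat \<Rightarrow> vert \<Rightarrow> vert \<Rightarrow> bool" where
  "gen_edge n u v \<longleftrightarrow> (\<exists>i<n.
      (u = (Ca, i) \<and> v = (Ca, Suc i mod n)) \<or>
      (u = (Cb, i) \<and> v = (Cb, Suc i mod n)) \<or>
      (u = (Cc, i) \<and> v = (Cc, Suc i mod n)) \<or>
      (u = (Cd, i) \<and> v = (Cd, Suc i mod n)) \<or>
      (u = (Ca, Suc i mod n) \<and> v = (Cb, i)) \<or>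
      (u = (Ca, i) \<and> v = (Cb, i)) \<or>
      (u = (Cb, i) \<and> v = (Cc, i)) \<or>
      (u = (Cc, i) \<and> v = (Cd, i)))"

definition adj :: "nat \<Rightarrow> vert \<Rightarrow> vert \<Rightarrow> bool" where
  "adj n u v \<longleftrightarrow> gen_edge n u v \<or> gen_edge n v u"

fun walk :: "nat \<Rightarrow> nat \<Rightarrow> vert \<Rightarrow> vert \<Rightarrow> bool" where
  "walk n 0 u v \<longleftrightarrow> u = v \<and> u \<in> verts n"
| "walk n (Suc k) u v \<longleftrightarrow> (\<exists>w. adj n u w \<and> walk n k w v)"

definition sdist :: "nat \<Rightarrow> vert \<Rightarrow> vert \<Rightarrow> nat" where
  "sdist n u v = (LEAST k. walk n k u v)"

definition local_resolving :: "nat \<Rightarrow> vert set \<Rightarrow> bool" where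
  "local_resolving n W \<longleftrightarrow> W \<subseteq> verts n \<and>
     (\<forall>u\<in>verts n. \<forall>v\<in>verts n. adj n u v \<longrightarrow>
        (\<exists>w\<in>W. sdist n u w \<noteq> sdist n v w))"

definition lmd :: "nat \<Rightarrow> nat" where
  "lmd n = (LEAST m. \<exists>W. local_resolving n W \<and> card W = m)"

definition local_metric_basis :: "nat \<Rightarrow> vert set \<Rightarrow> bool" where
  "local_metric_basis n W \<longleftrightarrow> local_resolving n W \<and> card W = lmd n"

end

theory Submission
  imports Defs
begin


definition off :: "nat \<Rightarrow> nat \<Rightarrow> nat \<Rightarrow> nat" where
  "off n i j = nat ((int i - int j) mod int n)"
definition prv :: "nat \<Rightarrow> nat \<Rightarrow> nat" where
  "prv n i = (i + n - 1) mod n"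
definition rho :: "nat \<Rightarrow> nat \<Rightarrow> nat" where
  "rho n m = min m (n - m)"

lemma off_lt: "0 < n \<Longrightarrow> off n i j < n"
  unfolding off_def by (simp add: nat_less_iff)

lemma off_self[simp]: "off n i i = 0"
  unfolding off_def by simp

lemma off_nxt: "0 < n \<Longrightarrow> off n (Suc i mod n) j = (off n i j + 1) mod n"
proof -
  assume n: "0 < n"
  have "int (Suc i mod n) = (int i + 1) mod int n" by (simp add: zmod_int add.commute)
  hence "(int (Suc i mod n) - int j) mod int n = ((int i - int j) mod int n + 1) mod int n"
    by (simp add: mod_simps algebra_simps)
  thus ?thesis unfolding off_def using n
    by (simp add: nat_mod_distrib nat_add_distrib)
qed

lemma off_trans: "0 < n \<Longrightarrow> off n i j = (off n i k + off n k j) mod n"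
proof -
  assume n: "0 < n"
  have "(int i - int j) mod int n = ((int i - int k) mod int n + (int k - int j) mod int n) mod int n"
    by (simp add: mod_simps)
  thus ?thesis unfolding off_def using n
    by (simp add: nat_mod_distrib nat_add_distrib)
qed

lemma off_add: "0 < n \<Longrightarrow> off n ((p + k) mod n) p = k mod n"
proof -
  assume n: "0 < n"
  have "int ((p + k) mod n) = (int p + int k) mod int n" by (simp add: zmod_int)
  hence "(int ((p + k) mod n) - int p) mod int n = int k mod int n"
    by (simp add: mod_simps)
  thus ?thesis unfolding off_def using n by (simp flip: zmod_int)
qed

lemma off_zero: "i < n \<Longrightarrow> j < n \<Longrightarrow> off n i j = 0 \<Longrightarrow> i = j"
proof -
  assume ij: "i < n" "j < n" and z: "off n i j = 0"
  hence n: "0 < n" by simp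
  have "(int i - int j) mod int n = 0" using z n unfolding off_def
    by (metis Euclidean_Rings.pos_mod_sign nat_0_iff order_antisym_conv of_nat_0_less_iff)
  hence "int n dvd int i - int j" by (simp add: dvd_eq_mod_eq_0)
  hence "int i mod int n = int j mod int n" by (simp add: mod_eq_dvd_iff)
  thus "i = j" using ij by simp
qed

lemma off_swap: "0 < n \<Longrightarrow> off n j i = (n - off n i j) mod n"
proof -
  assume n: "0 < n"
  have s: "(off n j i + off n i j) mod n = 0" using off_trans[OF n, of j j i] by simp
  have a: "off n j i < n" "off n i j < n" using off_lt n by auto
  show ?thesis
  proof (cases "off n i j = 0")
    case True thus ?thesis using s a by simp
  next
    case False
    have "off n j i + off n i j = n"
    proof (cases "off n j i + off n i j < n")
      case True thus ?thesis using s False by simp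
    next
      case F2: False
      hence "(off n j i + off n i j) mod n = (off n j i + off n i j - n) mod n" by (simp add: le_mod_geq)
      moreover have "off n j i + off n i j - n < n" using a by simp
      ultimately show ?thesis using s F2 by simp
    qed
    thus ?thesis using False by simp
  qed
qed

lemma mod_suc_lt: "(m::nat) < n \<Longrightarrow> (m + 1) mod n = (if m + 1 = n then 0 else m + 1)"
  by auto
lemma mod_pred_lt: "(m::nat) < n \<Longrightarrow> (m + n - 1) mod n = (if m = 0 then n - 1 else m - 1)"
proof (cases "m = 0")
  case True
  assume "m < n" thus ?thesis using True by auto
next
  case False
  assume "m < n"
  hence "m + n - 1 = (m - 1) + n" using False by simp
  hence "(m + n - 1) mod n = (m - 1) mod n" by simp
  thus ?thesis using False \<open>m < n\<close> by simp
qed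

lemma off_mod: "0 < n \<Longrightarrow> off n (i mod n) j = off n i j"
  unfolding off_def by (simp add: zmod_int mod_diff_left_eq)

lemma suc_prv: "0 < n \<Longrightarrow> Suc (prv n i) mod n = i mod n"
proof -
  assume n: "0 < n"
  have "Suc (prv n i) mod n = Suc (i + n - 1) mod n" unfolding prv_def by (simp add: mod_Suc_eq)
  also have "Suc (i + n - 1) = i + n" using n by simp
  finally show ?thesis by simp
qed

lemma off_prv: "0 < n \<Longrightarrow> off n (prv n i) j = (off n i j + n - 1) mod n"
proof -
  assume n: "0 < n"
  have "(off n (prv n i) j + 1) mod n = off n i j"
    using off_nxt[OF n, of "prv n i" j] suc_prv[OF n, of i] off_mod[OF n, of i j] by simp
  moreover have "off n (prv n i) j < n" using off_lt n by auto
  ultimately show ?thesis using mod_pred_lt[of "off n (prv n i) j" n] mod_suc_lt[of "off n (prv n i) j" n]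
    by (auto split: if_splits simp: mod_pred_lt[OF off_lt[OF n]])
qed



lemma adj_verts: "adj n x y \<Longrightarrow> x \<in> verts n \<and> y \<in> verts n"
  unfolding adj_def gen_edge_def verts_def by auto

lemma walk_lower:
  assumes h0: "h t = 0" and lip: "\<And>x y. adj n x y \<Longrightarrow> h x \<le> h y + 1"
  shows "walk n k x t \<Longrightarrow> h x \<le> k"
proof (induction k arbitrary: x)
  case 0 thus ?case using h0 by simp
next
  case (Suc k)
  then obtain w where "adj n x w" "walk n k w t" by auto
  thus ?case using Suc.IH lip by fastforce
qed

lemma walk_upper:
  assumes tv: "t \<in> verts n" and z: "\<And>x. x \<in> verts n \<Longrightarrow> h x = 0 \<Longrightarrow> x = t"
    and desc: "\<And>x. x \<in> verts n \<Longrightarrow> 0 < h x \<Longrightarrow> \<exists>y. adj n x y \<and> h y + 1 = h x"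
  shows "x \<in> verts n \<Longrightarrow> walk n (h x) x t"
proof (induction "h x" arbitrary: x)
  case 0 thus ?case using z tv by (metis walk.simps(1))
next
  case (Suc m)
  then obtain y where y: "adj n x y" "h y + 1 = h x" using desc by (metis zero_less_Suc)
  have "y \<in> verts n" using adj_verts[OF y(1)] by blast
  moreover have "m = h y" using y Suc.hyps(2) by simp
  ultimately have "walk n m y t" using Suc.hyps(1) by simp
  thus ?case using y Suc.hyps(2) by (metis Suc_eq_plus1 add_right_cancel walk.simps(2))
qed

lemma dist_char:
  assumes tv: "t \<in> verts n" and h0: "h t = 0"
    and z: "\<And>x. x \<in> verts n \<Longrightarrow> h x = 0 \<Longrightarrow> x = t"
    and lip: "\<And>x y. adj n x y \<Longrightarrow> h x \<le> h y + 1"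
    and desc: "\<And>x. x \<in> verts n \<Longrightarrow> 0 < h x \<Longrightarrow> \<exists>y. adj n x y \<and> h y + 1 = h x"
    and xv: "x \<in> verts n"
  shows "sdist n x t = h x"
  unfolding sdist_def
proof (rule Least_equality)
  show "walk n (h x) x t" using walk_upper[of t n h x] tv z desc xv by blast
  show "\<And>y. walk n y x t \<Longrightarrow> h x \<le> y" using walk_lower[of h t n] h0 lip by blast
qed



lemma adj_sym: "adj n x y \<Longrightarrow> adj n y x" unfolding adj_def by auto
lemma adj_ab: "j < n \<Longrightarrow> adj n (Ca,j) (Cb,j)" unfolding adj_def gen_edge_def by blast
lemma adj_ab': "j < n \<Longrightarrow> adj n (Ca,Suc j mod n) (Cb,j)" unfolding adj_def gen_edge_def by blast
lemma adj_cyc: "j < n \<Longrightarrow> adj n (X,j) (X,Suc j mod n)" unfolding adj_def gen_edge_def by (cases X) blast+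
lemma adj_bc: "j < n \<Longrightarrow> adj n (Cb,j) (Cc,j)" unfolding adj_def gen_edge_def by blast
lemma adj_cd: "j < n \<Longrightarrow> adj n (Cc,j) (Cd,j)" unfolding adj_def gen_edge_def by blast

lemma prv_lt: "0 < n \<Longrightarrow> prv n j < n" unfolding prv_def by simp
lemma prv_nxt: "i < n \<Longrightarrow> prv n (Suc i mod n) = i"
proof -
  assume i: "i < n"
  hence n: "0 < n" by simp
  have "prv n (Suc i mod n) = (if Suc i mod n = 0 then n - 1 else Suc i mod n - 1)"
    unfolding prv_def using mod_pred_lt[of "Suc i mod n" n] n by simp
  thus ?thesis using i by (auto simp: mod_if)
qed
lemma nxt_prv: "j < n \<Longrightarrow> Suc (prv n j) mod n = j"
  using suc_prv[of n j] by simp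

lemma off_nxt': "0 < n \<Longrightarrow> off n (Suc i mod n) j = (if off n i j + 1 = n then 0 else off n i j + 1)"
  using off_nxt[of n i j] mod_suc_lt[OF off_lt[of n i j]] by simp
lemma off_prv': "0 < n \<Longrightarrow> off n (prv n i) j = (if off n i j = 0 then n - 1 else off n i j - 1)"
  using off_prv[of n i j] mod_pred_lt[OF off_lt[of n i j]] by simp

fun lev :: "cyc \<Rightarrow> nat" where
  "lev Ca = 0" | "lev Cb = 0" | "lev Cc = 1" | "lev Cd = 2"

definition dl :: "nat \<Rightarrow> nat \<Rightarrow> nat" where
  "dl a b = (if a \<le> b then b - a else a - b)"

definition hB :: "nat \<Rightarrow> cyc \<Rightarrow> nat \<Rightarrow> vert \<Rightarrow> nat" where
  "hB n T q v = (case v of (X, j) \<Rightarrow> if X = Ca then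
      1 + lev T + min (rho n (off n j q)) (rho n (off n (prv n j) q))
    else dl (lev X) (lev T) + rho n (off n j q))"

definition hA :: "nat \<Rightarrow> nat \<Rightarrow> vert \<Rightarrow> nat" where
  "hA n p v = (case v of (X, j) \<Rightarrow> if X = Ca then rho n (off n j p)
    else lev X + 1 + min (rho n (off n j p)) (rho n (off n (Suc j mod n) p)))"

lemma rho_nxt:
  assumes n: "0 < n"
  shows "rho n (off n (Suc i mod n) q) \<le> rho n (off n i q) + 1"
    "rho n (off n i q) \<le> rho n (off n (Suc i mod n) q) + 1"
proof -
  have "off n i q < n" using off_lt[OF n] by blast
  thus "rho n (off n (Suc i mod n) q) \<le> rho n (off n i q) + 1"
    "rho n (off n i q) \<le> rho n (off n (Suc i mod n) q) + 1"
    unfolding off_nxt'[OF n] rho_def by auto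
qed

lemma rho_prv:
  assumes n: "0 < n" and i: "i < n"
  shows "rho n (off n (prv n i) q) \<le> rho n (off n i q) + 1"
    "rho n (off n i q) \<le> rho n (off n (prv n i) q) + 1"
  using rho_nxt[OF n, of "prv n i" q] nxt_prv[OF i] by auto

lemma hB_gen: "gen_edge n x y \<Longrightarrow> hB n T q x \<le> hB n T q y + 1 \<and> hB n T q y \<le> hB n T q x + 1"
proof -
  assume "gen_edge n x y"
  then obtain i where i: "i < n" and e: "(x = (Ca, i) \<and> y = (Ca, Suc i mod n)) \<or>
      (x = (Cb, i) \<and> y = (Cb, Suc i mod n)) \<or>
      (x = (Cc, i) \<and> y = (Cc, Suc i mod n)) \<or>
      (x = (Cd, i) \<and> y = (Cd, Suc i mod n)) \<or>
      (x = (Ca, Suc i mod n) \<and> y = (Cb, i)) \<or>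
      (x = (Ca, i) \<and> y = (Cb, i)) \<or>
      (x = (Cb, i) \<and> y = (Cc, i)) \<or>
      (x = (Cc, i) \<and> y = (Cd, i))" unfolding gen_edge_def by blast
  have n: "0 < n" using i by simp
  note r = rho_nxt[OF n, of i q] rho_prv[OF n i, of q]
  have lt: "lev T \<le> 2" by (cases T) auto
  from e show ?thesis
  proof (elim disjE)
  qed (use r lt in \<open>auto simp: hB_def prv_nxt[OF i] dl_def\<close>)
qed

lemma hB_lip: "adj n x y \<Longrightarrow> hB n T q x \<le> hB n T q y + 1"
  unfolding adj_def using hB_gen by blast

lemma hA_gen: "gen_edge n x y \<Longrightarrow> hA n p x \<le> hA n p y + 1 \<and> hA n p y \<le> hA n p x + 1"
proof -
  assume "gen_edge n x y"
  then obtain i where i: "i < n" and e: "(x = (Ca, i) \<and> y = (Ca, Suc i mod n)) \<or>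
      (x = (Cb, i) \<and> y = (Cb, Suc i mod n)) \<or>
      (x = (Cc, i) \<and> y = (Cc, Suc i mod n)) \<or>
      (x = (Cd, i) \<and> y = (Cd, Suc i mod n)) \<or>
      (x = (Ca, Suc i mod n) \<and> y = (Cb, i)) \<or>
      (x = (Ca, i) \<and> y = (Cb, i)) \<or>
      (x = (Cb, i) \<and> y = (Cc, i)) \<or>
      (x = (Cc, i) \<and> y = (Cd, i))" unfolding gen_edge_def by blast
  have n: "0 < n" using i by simp
  note r = rho_nxt[OF n, of i p] rho_nxt[OF n, of "Suc i mod n" p]
  from e show ?thesis
  proof (elim disjE)
  qed (use r in \<open>auto simp: hA_def\<close>)
qed

lemma hA_lip: "adj n x y \<Longrightarrow> hA n p x \<le> hA n p y + 1"
  unfolding adj_def using hA_gen by blast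

lemma rho_down:
  assumes n: "0 < n" and pos: "0 < rho n (off n j q)"
  shows "rho n (off n (prv n j) q) + 1 = rho n (off n j q) \<or>
         rho n (off n (Suc j mod n) q) + 1 = rho n (off n j q)"
proof -
  have "off n j q < n" using off_lt[OF n] by blast
  thus ?thesis using pos unfolding off_nxt'[OF n] off_prv'[OF n] rho_def by auto
qed

lemma rho_zero: "0 < n \<Longrightarrow> rho n (off n j q) = 0 \<Longrightarrow> off n j q = 0"
  using off_lt[of n j q] unfolding rho_def by auto

lemma hB_desc:
  assumes T: "T \<noteq> Ca" and xv: "x \<in> verts n" and pos: "0 < hB n T q x"
  shows "\<exists>y. adj n x y \<and> hB n T q y + 1 = hB n T q x"
proof -
  obtain X j where x: "x = (X, j)" by (cases x)
  have j: "j < n" using xv x unfolding verts_def by auto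
  hence n: "0 < n" by simp
  note adjs = adj_ab[OF j] adj_ab'[OF prv_lt[OF n], of j, unfolded nxt_prv[OF j]]
    adj_cyc[OF j] adj_sym[OF adj_cyc[OF prv_lt[OF n], of _ j, unfolded nxt_prv[OF j]]]
    adj_bc[OF j] adj_cd[OF j] adj_sym[OF adj_bc[OF j]] adj_sym[OF adj_cd[OF j]]
  show ?thesis
  proof (cases "X = Ca")
    case True
    show ?thesis
    proof (cases "rho n (off n j q) \<le> rho n (off n (prv n j) q)")
      case True
      thus ?thesis using \<open>X = Ca\<close> x adjs T
        by (intro exI[of _ "(Cb, j)"]) (auto simp: hB_def dl_def min_def)
    next
      case False
      thus ?thesis using \<open>X = Ca\<close> x adjs T
        by (intro exI[of _ "(Cb, prv n j)"]) (auto simp: hB_def dl_def min_def)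
    qed
  next
    case XC: False
    show ?thesis
    proof (cases "lev X = lev T")
      case False
      show ?thesis
      proof (cases "lev X < lev T")
        case True
        show ?thesis
        proof (cases X)
          case Cb thus ?thesis using True x adjs T
            by (intro exI[of _ "(Cc, j)"]) (cases T; auto simp: hB_def dl_def)
        next
          case Cc thus ?thesis using True x adjs T
            by (intro exI[of _ "(Cd, j)"]) (cases T; auto simp: hB_def dl_def)
        qed (use True XC in \<open>cases T; auto\<close>)+
      next
        case F2: False
        show ?thesis
        proof (cases X)
          case Cc thus ?thesis using F2 False x adjs T
            by (intro exI[of _ "(Cb, j)"]) (cases T; auto simp: hB_def dl_def)
        next
          case Cd thus ?thesis using F2 False x adjs T
            by (intro exI[of _ "(Cc, j)"]) (cases T; auto simp: hB_def dl_def)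
        qed (use F2 False XC in \<open>cases T; auto\<close>)+
      qed
    next
      case True
      hence "0 < rho n (off n j q)" using pos x XC by (simp add: hB_def dl_def)
      from rho_down[OF n this] show ?thesis
      proof
        assume "rho n (off n (prv n j) q) + 1 = rho n (off n j q)"
        thus ?thesis using True x adjs XC
          by (intro exI[of _ "(X, prv n j)"]) (auto simp: hB_def dl_def)
      next
        assume "rho n (off n (Suc j mod n) q) + 1 = rho n (off n j q)"
        thus ?thesis using True x adjs XC
          by (intro exI[of _ "(X, Suc j mod n)"]) (auto simp: hB_def dl_def)
      qed
    qed
  qed
qed

lemma hB_zero:
  assumes T: "T \<noteq> Ca" and q: "q < n" and xv: "x \<in> verts n" and z: "hB n T q x = 0"
  shows "x = (T, q)"
proof -
  obtain X j where x: "x = (X, j)" by (cases x)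
  have j: "j < n" using xv x unfolding verts_def by auto
  hence n: "0 < n" by simp
  have XC: "X \<noteq> Ca" using z x by (auto simp: hB_def)
  hence "lev X = lev T" "rho n (off n j q) = 0" using z x by (auto simp: hB_def dl_def split: if_splits)
  hence "X = T" "j = q" using XC T off_zero[OF j q] rho_zero[OF n]
    by (cases X; cases T; auto)+
  thus ?thesis using x by simp
qed

lemma dist_B:
  assumes T: "T \<noteq> Ca" and q: "q < n" and xv: "x \<in> verts n"
  shows "sdist n x (T, q) = hB n T q x"
proof (rule dist_char[OF _ _ _ _ _ xv])
  show "(T, q) \<in> verts n" using q unfolding verts_def by simp
  show "hB n T q (T, q) = 0" using T by (simp add: hB_def dl_def rho_def)
qed (use hB_zero[OF T q] hB_lip hB_desc[OF T] in auto)

lemma hA_desc: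
  assumes xv: "x \<in> verts n" and pos: "0 < hA n p x"
  shows "\<exists>y. adj n x y \<and> hA n p y + 1 = hA n p x"
proof -
  obtain X j where x: "x = (X, j)" by (cases x)
  have j: "j < n" using xv x unfolding verts_def by auto
  hence n: "0 < n" by simp
  note adjs = adj_sym[OF adj_ab[OF j]] adj_sym[OF adj_ab'[OF j]]
    adj_cyc[OF j] adj_sym[OF adj_cyc[OF prv_lt[OF n], of _ j, unfolded nxt_prv[OF j]]]
    adj_sym[OF adj_bc[OF j]] adj_sym[OF adj_cd[OF j]]
  show ?thesis
  proof (cases X)
    case Ca
    hence "0 < rho n (off n j p)" using pos x by (simp add: hA_def)
    from rho_down[OF n this] show ?thesis
    proof
      assume "rho n (off n (prv n j) p) + 1 = rho n (off n j p)"
      thus ?thesis using Ca x adjs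
        by (intro exI[of _ "(Ca, prv n j)"]) (auto simp: hA_def)
    next
      assume "rho n (off n (Suc j mod n) p) + 1 = rho n (off n j p)"
      thus ?thesis using Ca x adjs
        by (intro exI[of _ "(Ca, Suc j mod n)"]) (auto simp: hA_def)
    qed
  next
    case Cb
    show ?thesis
    proof (cases "rho n (off n j p) \<le> rho n (off n (Suc j mod n) p)")
      case True
      thus ?thesis using Cb x adjs
        by (intro exI[of _ "(Ca, j)"]) (auto simp: hA_def min_def)
    next
      case False
      thus ?thesis using Cb x adjs
        by (intro exI[of _ "(Ca, Suc j mod n)"]) (auto simp: hA_def min_def)
    qed
  next
    case Cc thus ?thesis using x adjs
      by (intro exI[of _ "(Cb, j)"]) (auto simp: hA_def)
  next
    case Cd thus ?thesis using x adjs
      by (intro exI[of _ "(Cc, j)"]) (auto simp: hA_def)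
  qed
qed

lemma hA_zero:
  assumes p: "p < n" and xv: "x \<in> verts n" and z: "hA n p x = 0"
  shows "x = (Ca, p)"
proof -
  obtain X j where x: "x = (X, j)" by (cases x)
  have j: "j < n" using xv x unfolding verts_def by auto
  hence n: "0 < n" by simp
  have XC: "X = Ca" using z x by (auto simp: hA_def split: if_splits)
  hence "rho n (off n j p) = 0" using z x by (auto simp: hA_def)
  hence "j = p" using off_zero[OF j p] rho_zero[OF n, of j p] by simp
  thus ?thesis using x XC by simp
qed

lemma dist_A:
  assumes p: "p < n" and xv: "x \<in> verts n"
  shows "sdist n x (Ca, p) = hA n p x"
proof (rule dist_char[OF _ _ _ _ _ xv])
  show "(Ca, p) \<in> verts n" using p unfolding verts_def by simp
  show "hA n p (Ca, p) = 0" by (simp add: hA_def rho_def)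
qed (use hA_zero[OF p] hA_lip hA_desc in auto)



lemma LB1:
  assumes T: "T \<noteq> Ca" and q: "q < n" and i: "i < n" and m: "1 \<le> off n i q" "2 * off n i q \<le> n"
  shows "sdist n (Ca, i) (T, q) = sdist n (Cb, i) (T, q)"
proof -
  have n: "0 < n" using i by simp
  have "hB n T q (Ca, i) = hB n T q (Cb, i)"
    using m off_lt[OF n, of i q] unfolding hB_def off_prv'[OF n] rho_def dl_def by auto
  thus ?thesis using dist_B[OF T q] i unfolding verts_def by simp
qed

lemma LB2:
  assumes T: "T \<noteq> Ca" and q: "q < n" and i: "i < n" and n4: "4 \<le> n" and ev: "n = 2 * k"
    and m: "off n i q = 0 \<or> n < 2 * off n i q"
  shows "sdist n (Ca, i) (T, q) = sdist n (Cb, prv n i) (T, q)"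
proof -
  have n: "0 < n" using i by simp
  have par0: "\<And>m::nat. n < 2 * m \<Longrightarrow> n + 2 \<le> 2 * m" using ev by presburger
  have par: "n < 2 * off n i q \<Longrightarrow> n + 2 \<le> 2 * off n i q" using par0 by blast
  have "hB n T q (Ca, i) = hB n T q (Cb, prv n i)"
    using m off_lt[OF n, of i q] n4 par by (auto simp: hB_def off_prv'[OF n] rho_def dl_def)
  thus ?thesis using dist_B[OF T q] i prv_lt[OF n] unfolding verts_def by simp
qed

lemma LB3:
  assumes T: "T \<noteq> Ca" and q: "q < n" and i: "i < n" and n4: "4 \<le> n"
    and m: "off n i q = 0 \<or> 2 * off n i q = n"
  shows "sdist n (Ca, i) (T, q) = sdist n (Ca, Suc i mod n) (T, q)"
proof -
  have n: "0 < n" using i by simp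
  have "hB n T q (Ca, i) = hB n T q (Ca, Suc i mod n)"
    using m off_lt[OF n, of i q] n4 by (auto simp: hB_def off_prv'[OF n] off_nxt'[OF n] prv_nxt[OF i] rho_def)
  thus ?thesis using dist_B[OF T q] i n unfolding verts_def by simp
qed

lemma LA1:
  assumes p: "p < n" and i: "i < n" and m: "n \<le> 2 * off n i p"
  shows "sdist n (Ca, i) (Ca, p) = sdist n (Cb, i) (Ca, p)"
proof -
  have n: "0 < n" using i by simp
  have "hA n p (Ca, i) = hA n p (Cb, i)"
    using m off_lt[OF n, of i p] unfolding hA_def off_nxt'[OF n] rho_def by auto
  thus ?thesis using dist_A[OF p] i unfolding verts_def by simp
qed

lemma LA2:
  assumes p: "p < n" and i: "i < n" and m: "1 \<le> off n i p" "2 * off n i p \<le> n"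
  shows "sdist n (Ca, i) (Ca, p) = sdist n (Cb, prv n i) (Ca, p)"
proof -
  have n: "0 < n" using i by simp
  have "hA n p (Ca, i) = hA n p (Cb, prv n i)"
    using m off_lt[OF n, of i p] by (auto simp: hA_def off_prv'[OF n] nxt_prv[OF i] rho_def)
  thus ?thesis using dist_A[OF p] i prv_lt[OF n] unfolding verts_def by simp
qed



lemma off_swap': "0 < n \<Longrightarrow> off n j i = (if off n i j = 0 then 0 else n - off n i j)"
  using off_swap[of n j i] off_lt[of n i j] by auto

lemma off_one: "1 < n \<Longrightarrow> off n (Suc q mod n) q = 1"
  using off_nxt'[of n q q] by auto

definition bad :: "nat \<Rightarrow> vert \<Rightarrow> vert \<Rightarrow> bool" where
  "bad n t1 t2 \<longleftrightarrow> (\<exists>u v. adj n u v \<and> sdist n u t1 = sdist n v t1 \<and> sdist n u t2 = sdist n v t2)"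

lemma bad_BB:
  assumes ev: "n = 2 * k" and k: "2 \<le> k" and T1: "T1 \<noteq> Ca" and T2: "T2 \<noteq> Ca"
    and p: "p < n" and q: "q < n"
  shows "bad n (T1, p) (T2, q)"
proof -
  have n: "0 < n" and n4: "4 \<le> n" using ev k by auto
  define r where "r = off n p q"
  have rl: "r < n" using off_lt[OF n] r_def by blast
  have qp: "off n q p = (if r = 0 then 0 else n - r)" using off_swap'[OF n, of q p] r_def by simp
  have par0: "\<And>m::nat. n < 2 * m \<Longrightarrow> n + 2 \<le> 2 * m" using ev by presburger
  have par1: "\<And>m::nat. 2 * m < n \<Longrightarrow> 2 * m + 2 \<le> n" using ev by presburger
  have sq: "Suc q mod n < n" "Suc p mod n < n" using n by auto
  show ?thesis
  proof (cases "2 * r = n")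
    case True
    have "sdist n (Ca, q) (T1, p) = sdist n (Ca, Suc q mod n) (T1, p)"
      by (rule LB3[OF T1 p q n4]) (use qp True n in auto)
    moreover have "sdist n (Ca, q) (T2, q) = sdist n (Ca, Suc q mod n) (T2, q)"
      by (rule LB3[OF T2 q q n4]) simp
    ultimately show ?thesis unfolding bad_def using adj_cyc[OF q] by blast
  next
    case F: False
    show ?thesis
    proof (cases "r = 0 \<or> n < 2 * r")
      case True
      have o: "off n (Suc q mod n) p = (off n q p + 1) mod n" using off_nxt[OF n] by blast
      have "sdist n (Ca, Suc q mod n) (T1, p) = sdist n (Cb, Suc q mod n) (T1, p)"
      proof (rule LB1[OF T1 p sq(1)])
        show "1 \<le> off n (Suc q mod n) p" "2 * off n (Suc q mod n) p \<le> n"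
          using o qp True par0[of r] rl n4 by (auto simp: mod_suc_lt)
      qed
      moreover have "sdist n (Ca, Suc q mod n) (T2, q) = sdist n (Cb, Suc q mod n) (T2, q)"
        by (rule LB1[OF T2 q sq(1)]) (use off_one[of n q] n4 in auto)
      ultimately show ?thesis unfolding bad_def using adj_ab[OF sq(1)] by blast
    next
      case False
      have o: "off n (Suc p mod n) q = (r + 1) mod n" using off_nxt[OF n] r_def by blast
      have "sdist n (Ca, Suc p mod n) (T2, q) = sdist n (Cb, Suc p mod n) (T2, q)"
      proof (rule LB1[OF T2 q sq(2)])
        show "1 \<le> off n (Suc p mod n) q" "2 * off n (Suc p mod n) q \<le> n"
          using o False F par1[of r] rl n4 by (auto simp: mod_suc_lt)
      qed
      moreover have "sdist n (Ca, Suc p mod n) (T1, p) = sdist n (Cb, Suc p mod n) (T1, p)"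
        by (rule LB1[OF T1 p sq(2)]) (use off_one[of n p] n4 in auto)
      ultimately show ?thesis unfolding bad_def using adj_ab[OF sq(2)] by blast
    qed
  qed
qed

lemma bad_AB:
  assumes ev: "n = 2 * k" and k: "2 \<le> k" and T: "T \<noteq> Ca"
    and p: "p < n" and q: "q < n"
  shows "bad n (Ca, p) (T, q)"
proof -
  have n: "0 < n" and n4: "4 \<le> n" using ev k by auto
  define r where "r = off n q p"
  have rl: "r < n" using off_lt[OF n] r_def by blast
  have sq: "Suc q mod n < n" using n by auto
  have kl: "k < n" "(p + k) mod n < n" using ev k n by auto
  have offk: "off n ((p + k) mod n) p = k" using off_add[OF n, of p k] kl by simp
  show ?thesis
  proof (cases "1 \<le> r \<and> 2 * r \<le> n")
    case True
    have "sdist n (Ca, q) (Ca, p) = sdist n (Cb, prv n q) (Ca, p)"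
      by (rule LA2[OF p q]) (use True r_def in auto)
    moreover have "sdist n (Ca, q) (T, q) = sdist n (Cb, prv n q) (T, q)"
      by (rule LB2[OF T q q n4 ev]) simp
    moreover have "adj n (Ca, q) (Cb, prv n q)"
      using adj_ab'[OF prv_lt[OF n], of q] nxt_prv[OF q] by simp
    ultimately show ?thesis unfolding bad_def by blast
  next
    case F1: False
    show ?thesis
    proof (cases "n \<le> 2 * r + 2 \<and> r + 2 \<le> n")
      case True
      have o: "off n (Suc q mod n) p = (r + 1) mod n" using off_nxt[OF n] r_def by blast
      have "sdist n (Ca, Suc q mod n) (Ca, p) = sdist n (Cb, Suc q mod n) (Ca, p)"
        by (rule LA1[OF p sq]) (use o True in \<open>auto simp: mod_suc_lt\<close>)
      moreover have "sdist n (Ca, Suc q mod n) (T, q) = sdist n (Cb, Suc q mod n) (T, q)"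
        by (rule LB1[OF T q sq]) (use off_one[of n q] n4 in auto)
      ultimately show ?thesis unfolding bad_def using adj_ab[OF sq] by blast
    next
      case F2: False
      have "r = 0 \<or> r = n - 1" using F1 F2 rl ev by auto
      thus ?thesis
      proof
        assume r0: "r = 0"
        hence qp: "q = p" using off_zero[OF q p] r_def by simp
        have "sdist n (Ca, (p + k) mod n) (Ca, p) = sdist n (Cb, (p + k) mod n) (Ca, p)"
          by (rule LA1[OF p kl(2)]) (use offk ev in auto)
        moreover have "sdist n (Ca, (p + k) mod n) (T, q) = sdist n (Cb, (p + k) mod n) (T, q)"
          by (rule LB1[OF T q kl(2)]) (use offk ev k qp in auto)
        ultimately show ?thesis unfolding bad_def using adj_ab[OF kl(2)] by blast
      next
        assume r1: "r = n - 1"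
        have pq: "off n p q = 1" using off_swap'[OF n, of p q] r_def r1 n4 by (simp, linarith)
        have o: "off n ((p + k) mod n) q = (k + 1) mod n"
          using off_trans[OF n, of "(p + k) mod n" q p] offk pq by simp
        have "sdist n (Ca, (p + k) mod n) (Ca, p) = sdist n (Cb, prv n ((p + k) mod n)) (Ca, p)"
          by (rule LA2[OF p kl(2)]) (use offk ev k in auto)
        moreover have "sdist n (Ca, (p + k) mod n) (T, q) = sdist n (Cb, prv n ((p + k) mod n)) (T, q)"
          by (rule LB2[OF T q kl(2) n4 ev]) (use o ev k in auto)
        moreover have "adj n (Ca, (p + k) mod n) (Cb, prv n ((p + k) mod n))"
          using adj_ab'[OF prv_lt[OF n], of "(p + k) mod n"] nxt_prv[OF kl(2)] by simp
        ultimately show ?thesis unfolding bad_def by blast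
      qed
    qed
  qed
qed


theorem lemma3p4:
  fixes n k :: nat
  assumes "n = 2 * k" and "k \<ge> 2" and "lmd n = 2"
  shows "\<not> (\<exists>W X Y p q. local_metric_basis n W \<and> W = {(X, p), (Y, q)} \<and>
                 X \<noteq> Y \<and> p < n \<and> q < n)"
proof
  assume "\<exists>W X Y p q. local_metric_basis n W \<and> W = {(X, p), (Y, q)} \<and>
                 X \<noteq> Y \<and> p < n \<and> q < n"
  then obtain W X Y p q where lb: "local_metric_basis n W" and W: "W = {(X, p), (Y, q)}"
    and XY: "X \<noteq> Y" and p: "p < n" and q: "q < n" by blast
  have lr: "local_resolving n W" using lb unfolding local_metric_basis_def by blast
  have b: "bad n (X, p) (Y, q)"
  proof (cases "X = Ca")
    case True
    thus ?thesis using bad_AB[OF assms(1,2) _ p q, of Y] XY by simp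
  next
    case False
    show ?thesis
    proof (cases "Y = Ca")
      case True
      thus ?thesis using bad_AB[OF assms(1,2) False q p] unfolding bad_def by metis
    next
      case F2: False
      thus ?thesis using bad_BB[OF assms(1,2) False F2 p q] by simp
    qed
  qed
  then obtain u v where uv: "adj n u v" "sdist n u (X, p) = sdist n v (X, p)"
    "sdist n u (Y, q) = sdist n v (Y, q)" unfolding bad_def by blast
  have "u \<in> verts n" "v \<in> verts n" using adj_verts[OF uv(1)] by auto
  then obtain w where "w \<in> W" "sdist n u w \<noteq> sdist n v w"
    using lr uv(1) unfolding local_resolving_def by blast
  thus False using W uv by auto
qed

end
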